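(* Let $X_1,\ldots,X_n$ be $\{0,1\}$-valued random variables satisfying negative regression. Let $f:\{0,1\}^n \to \mathbb{R}$ be $1$-Lipschitz, and let $\mu = \mathbb{E}[f(X_1,\ldots,X_n)]$. Then for every $t>0$, $$\Pr[f(X_1,\ldots,X_n) \ge \mu + t] \le e^{-t^2/(2n)}, \qquad \Pr[f(X_1,\ldots,X_n) \le \mu - t] \le e^{-t^2/(2n)}.$$ If moreover $f$ is monotone (non-decreasing in each coordinate), both bounds improve to $e^{-2t^2/n}$.
   Context: For $S\subseteq[n]$, $X_S\in\{0,1\}^S$ denotes the tuple $(X_i)_{i\in S}$. The variables $X_1,\ldots,X_n$ satisfy negative regression if for all disjoint $I,J\subseteq[n]$, every non-decreasing function $g:\{0,1\}^I\to\mathbb{R}$, and all $a\le b$ in $\{0,1\}^J$ (coordinatewise) such that $\Pr[X_J=a]>0$ and $\Pr[X_J=b]>0$, we have $\mathbb{E}[g(X_I)\mid X_J=a]\ge \mathbb{E}[g(X_I)\mid X_J=b]$. A function $f:\{0,1\}^n\to\mathbb{R}$ is $1$-Lipschitz if changing any single coordinate of its argument changes its value by at most $1$ in absolute value. *)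

theory Defs
  imports "HOL-Probability.Probability"
begin

text \<open>The joint law of (X_1,...,X_n) is a pmf on bool lists of length n
  (index i < n stands for X_(i+1); True = 1, False = 0).\<close>

definition proj :: "nat set \<Rightarrow> bool list \<Rightarrow> (nat \<Rightarrow> bool)" where
  "proj S xs = (\<lambda>i. if i \<in> S then xs ! i else False)"

text \<open>The set {0,1}^S, encoded as functions that are False outside S.\<close>
definition assignments :: "nat set \<Rightarrow> (nat \<Rightarrow> bool) set" where
  "assignments S = {x. \<forall>i. i \<notin> S \<longrightarrow> x i = False}"

definition neg_regression :: "nat \<Rightarrow> bool list pmf \<Rightarrow> bool" where
  "neg_regression n p \<longleftrightarrow>
    (\<forall>I J (g :: (nat \<Rightarrow> bool) \<Rightarrow> real) a b.
       I \<subseteq> {..<n} \<longrightarrow> J \<subseteq> {..<n} \<longrightarrow> I \<inter> J = {} \<longrightarrow>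
       mono_on (assignments I) g \<longrightarrow>
       a \<in> assignments J \<longrightarrow> b \<in> assignments J \<longrightarrow> a \<le> b \<longrightarrow>
       measure_pmf.prob p {xs. proj J xs = a} > 0 \<longrightarrow>
       measure_pmf.prob p {xs. proj J xs = b} > 0 \<longrightarrow>
       measure_pmf.expectation (cond_pmf p {xs. proj J xs = a}) (\<lambda>xs. g (proj I xs))
         \<ge> measure_pmf.expectation (cond_pmf p {xs. proj J xs = b}) (\<lambda>xs. g (proj I xs)))"

definition lipschitz1 :: "nat \<Rightarrow> (bool list \<Rightarrow> real) \<Rightarrow> bool" where
  "lipschitz1 n f \<longleftrightarrow>
    (\<forall>xs i b. length xs = n \<longrightarrow> i < n \<longrightarrow> \<bar>f xs - f (xs[i := b])\<bar> \<le> 1)"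

definition monotone_fun :: "nat \<Rightarrow> (bool list \<Rightarrow> real) \<Rightarrow> bool" where
  "monotone_fun n f \<longleftrightarrow>
    (\<forall>xs ys. length xs = n \<longrightarrow> length ys = n \<longrightarrow> list_all2 (\<le>) xs ys \<longrightarrow> f xs \<le> f ys)"

end

theory Submission
  imports Defs
begin

lemma finite_len: "finite {xs::bool list. length xs = n}"
  using finite_lists_length_eq[of "UNIV::bool set" n] by simp

lemma E_fin: "finite (set_pmf p) \<Longrightarrow> measure_pmf.expectation p h = (\<Sum>x\<in>set_pmf p. h x * pmf p x)"
  by (rule integral_measure_pmf_real) auto

lemma P_fin: "finite (set_pmf p) \<Longrightarrow> measure_pmf.prob p E = (\<Sum>x\<in>set_pmf p \<inter> E. pmf p x)"
proof -
  assume f: "finite (set_pmf p)"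
  have "measure_pmf.prob p E = measure_pmf.prob p (set_pmf p \<inter> E)"
    by (metis inf_commute measure_Int_set_pmf)
  also have "\<dots> = (\<Sum>x\<in>set_pmf p \<inter> E. pmf p x)"
    using f by (simp add: measure_measure_pmf_finite)
  finally show ?thesis .
qed

lemma E_cond: assumes f: "finite (set_pmf p)" and pos: "measure_pmf.prob p E > 0"
  shows "measure_pmf.expectation (cond_pmf p E) h = (\<Sum>x\<in>set_pmf p \<inter> E. h x * pmf p x) / measure_pmf.prob p E"
proof -
  have ne: "set_pmf p \<inter> E \<noteq> {}" using pos measure_pmf_zero_iff[of p E] by auto
  have "measure_pmf.expectation (cond_pmf p E) h = (\<Sum>x\<in>set_pmf p \<inter> E. h x * pmf (cond_pmf p E) x)"
    using E_fin[of "cond_pmf p E" h] f ne by simp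
  also have "\<dots> = (\<Sum>x\<in>set_pmf p \<inter> E. h x * pmf p x / measure_pmf.prob p E)"
    by (rule sum.cong) (auto simp: pmf_cond[OF ne])
  also have "\<dots> = (\<Sum>x\<in>set_pmf p \<inter> E. h x * pmf p x) / measure_pmf.prob p E"
    by (simp add: sum_divide_distrib)
  finally show ?thesis .
qed

lemma cond_cond: assumes fin: "finite (set_pmf p)" and ne: "set_pmf p \<inter> (A \<inter> B) \<noteq> {}"
  shows "cond_pmf (cond_pmf p A) B = cond_pmf p (A \<inter> B)"
proof (rule pmf_eqI)
  fix x
  have neA: "set_pmf p \<inter> A \<noteq> {}" using ne by auto
  have neB: "set_pmf (cond_pmf p A) \<inter> B \<noteq> {}" using ne neA by auto
  have pA: "measure_pmf.prob p A > 0" using neA by (auto intro: measure_pmf_posI)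
  have m: "measure_pmf.prob (cond_pmf p A) B = measure_pmf.prob p (A \<inter> B) / measure_pmf.prob p A"
  proof -
    have "measure_pmf.prob (cond_pmf p A) B = measure_pmf.prob (cond_pmf p A) (set_pmf p \<inter> A \<inter> B)"
      using measure_Int_set_pmf[of "cond_pmf p A" B] neA by (simp add: Int_commute Int_left_commute)
    also have "\<dots> = integral\<^sup>L (cond_pmf p A) (indicator (set_pmf p \<inter> A \<inter> B))" by simp
    also have "\<dots> = (\<Sum>y\<in>set_pmf p \<inter> A. indicator (set_pmf p \<inter> A \<inter> B) y * pmf (cond_pmf p A) y)"
      by (rule integral_measure_pmf_real) (use neA fin in auto)
    also have "\<dots> = (\<Sum>y\<in>set_pmf p \<inter> A. indicator (A \<inter> B) y * pmf p y) / measure_pmf.prob p A"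
      by (simp add: sum_divide_distrib pmf_cond[OF neA] indicator_def)
    also have "(\<Sum>y\<in>set_pmf p \<inter> A. indicator (A \<inter> B) y * pmf p y) = integral\<^sup>L p (indicator (A \<inter> B))"
      by (rule integral_measure_pmf_real[symmetric]) (use fin in \<open>auto simp: indicator_def split: if_splits\<close>)
    finally show ?thesis by simp
  qed
  show "pmf (cond_pmf (cond_pmf p A) B) x = pmf (cond_pmf p (A \<inter> B)) x"
    using pA by (simp add: pmf_cond[OF neB] pmf_cond[OF neA] pmf_cond[OF ne] m)
qed

lemma E_cong: "(\<And>x. x \<in> set_pmf q \<Longrightarrow> f x = g x) \<Longrightarrow> measure_pmf.expectation q f = measure_pmf.expectation q g"
  by (rule integral_cong_AE) (auto simp: AE_measure_pmf_iff)

lemma proj_insert_eq: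
  assumes "i \<notin> J" "a \<in> assignments J"
  shows "(proj (insert i J) xs = a(i:=c)) \<longleftrightarrow> (xs!i = c \<and> proj J xs = a)"
proof
  assume h: "proj (insert i J) xs = a(i:=c)"
  have 1: "xs!i = c" using fun_cong[OF h, of i] by (simp add: proj_def)
  have "proj J xs j = a j" for j
    using fun_cong[OF h, of j] assms by (cases "j = i") (auto simp: proj_def assignments_def split: if_splits)
  thus "xs!i = c \<and> proj J xs = a" using 1 by auto
next
  assume "xs!i = c \<and> proj J xs = a"
  thus "proj (insert i J) xs = a(i:=c)" using assms
    by (auto simp: proj_def assignments_def fun_eq_iff split: if_splits)
qed

lemma nr_cond:
  assumes sup: "set_pmf p \<subseteq> {xs. length xs = n}" and nr: "neg_regression n p" and i: "i < n"
    and pos: "set_pmf p \<inter> {xs. xs!i = c} \<noteq> {}"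
  shows "neg_regression n (cond_pmf p {xs. xs!i = c})"
  unfolding neg_regression_def
proof (intro allI impI)
  fix I J and g :: "(nat \<Rightarrow> bool) \<Rightarrow> real" and a b
  define F where "F = {xs::bool list. xs!i = c}"
  assume I: "I \<subseteq> {..<n}" and J: "J \<subseteq> {..<n}" and IJ: "I \<inter> J = {}"
    and mono: "mono_on (assignments I) g" and a: "a \<in> assignments J" and b: "b \<in> assignments J"
    and ab: "a \<le> b"
    and pa: "0 < measure_pmf.prob (cond_pmf p {xs. xs ! i = c}) {xs. proj J xs = a}"
    and pb: "0 < measure_pmf.prob (cond_pmf p {xs. xs ! i = c}) {xs. proj J xs = b}"
  have fin: "finite (set_pmf p)" using sup finite_len finite_subset by blast
  have neX: "set_pmf p \<inter> (F \<inter> X) \<noteq> {}" if "0 < measure_pmf.prob (cond_pmf p F) X" for X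
  proof
    assume e: "set_pmf p \<inter> (F \<inter> X) = {}"
    have "set_pmf p \<inter> F \<noteq> {}" using pos by (simp add: F_def)
    hence "set_pmf (cond_pmf p F) \<inter> X = {}" using e by (auto)
    thus False using that measure_pmf_zero_iff[of "cond_pmf p F" X] by simp
  qed
  have na: "set_pmf p \<inter> (F \<inter> {xs. proj J xs = a}) \<noteq> {}" using neX pa F_def by blast
  have nb: "set_pmf p \<inter> (F \<inter> {xs. proj J xs = b}) \<noteq> {}" using neX pb F_def by blast
  have ca: "cond_pmf (cond_pmf p F) {xs. proj J xs = a} = cond_pmf p (F \<inter> {xs. proj J xs = a})"
    by (rule cond_cond[OF fin na])
  have cb: "cond_pmf (cond_pmf p F) {xs. proj J xs = b} = cond_pmf p (F \<inter> {xs. proj J xs = b})"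
    by (rule cond_cond[OF fin nb])
  show "measure_pmf.expectation (cond_pmf (cond_pmf p {xs. xs ! i = c}) {xs. proj J xs = b}) (\<lambda>xs. g (proj I xs))
        \<le> measure_pmf.expectation (cond_pmf (cond_pmf p {xs. xs ! i = c}) {xs. proj J xs = a}) (\<lambda>xs. g (proj I xs))"
  proof (cases "i \<in> J")
    case True
    have eqa: "F \<inter> {xs. proj J xs = a} = {xs. proj J xs = a}"
    proof -
      obtain x where x: "x \<in> set_pmf p" "x!i = c" "proj J x = a" using na F_def by blast
      hence "a i = c" using True by (auto simp: proj_def)
      thus ?thesis using True by (auto simp: F_def proj_def)
    qed
    have eqb: "F \<inter> {xs. proj J xs = b} = {xs. proj J xs = b}"
    proof -
      obtain x where x: "x \<in> set_pmf p" "x!i = c" "proj J x = b" using nb F_def by blast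
      hence "b i = c" using True by (auto simp: proj_def)
      thus ?thesis using True by (auto simp: F_def proj_def)
    qed
    have "0 < measure_pmf.prob p {xs. proj J xs = a}" using na by (auto intro: measure_pmf_posI)
    moreover have "0 < measure_pmf.prob p {xs. proj J xs = b}" using nb by (auto intro: measure_pmf_posI)
    ultimately show ?thesis using nr I J IJ mono a b ab unfolding neg_regression_def F_def[symmetric] ca cb eqa eqb
      by blast
  next
    case False
    define J' where "J' = insert i J"
    define I' where "I' = I - {i}"
    define g' where "g' = (\<lambda>z. g (\<lambda>j. if j = i \<and> i \<in> I then c else z j))"
    have eqa: "F \<inter> {xs. proj J xs = a} = {xs. proj J' xs = a(i:=c)}"
      using proj_insert_eq[OF False a] by (auto simp: F_def J'_def)
    have eqb: "F \<inter> {xs. proj J xs = b} = {xs. proj J' xs = b(i:=c)}"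
      using proj_insert_eq[OF False b] by (auto simp: F_def J'_def)
    have gg: "g (proj I xs) = g' (proj I' xs)" if "xs!i = c" for xs
      unfolding g'_def I'_def using that by (intro arg_cong[where f=g]) (auto simp: proj_def fun_eq_iff)
    have "measure_pmf.expectation (cond_pmf p {xs. proj J' xs = b(i:=c)}) (\<lambda>xs. g' (proj I' xs))
        \<le> measure_pmf.expectation (cond_pmf p {xs. proj J' xs = a(i:=c)}) (\<lambda>xs. g' (proj I' xs))"
    proof -
      have "I' \<subseteq> {..<n}" "J' \<subseteq> {..<n}" "I' \<inter> J' = {}" using I J IJ i by (auto simp: I'_def J'_def)
      moreover have "mono_on (assignments I') g'"
      proof (rule mono_onI)
        fix z z' assume z: "z \<in> assignments I'" "z' \<in> assignments I'" "z \<le> z'"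
        show "g' z \<le> g' z'" unfolding g'_def
          by (rule mono_onD[OF mono]) (use z in \<open>auto simp: assignments_def I'_def le_fun_def\<close>)
      qed
      moreover have "a(i:=c) \<in> assignments J'" "b(i:=c) \<in> assignments J'" "a(i:=c) \<le> b(i:=c)"
        using a b ab by (auto simp: assignments_def J'_def le_fun_def)
      moreover have "0 < measure_pmf.prob p {xs. proj J' xs = a(i:=c)}"
        using na eqa by (auto intro: measure_pmf_posI)
      moreover have "0 < measure_pmf.prob p {xs. proj J' xs = b(i:=c)}"
        using nb eqb by (auto intro: measure_pmf_posI)
      ultimately show ?thesis using nr unfolding neg_regression_def by blast
    qed
    moreover have "measure_pmf.expectation (cond_pmf p {xs. proj J' xs = a(i:=c)}) (\<lambda>xs. g' (proj I' xs))
       = measure_pmf.expectation (cond_pmf p {xs. proj J' xs = a(i:=c)}) (\<lambda>xs. g (proj I xs))"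
    proof (rule E_cong)
      fix x assume x: "x \<in> set_pmf (cond_pmf p {xs. proj J' xs = a(i:=c)})"
      have ne: "set_pmf p \<inter> {xs. proj J' xs = a(i:=c)} \<noteq> {}" using na eqa by simp
      have "x \<in> {xs. proj J' xs = a(i:=c)}" using x set_cond_pmf[OF ne] by auto
      hence "x!i = c" using eqa by (auto simp: F_def)
      thus "g' (proj I' x) = g (proj I x)" using gg by simp
    qed
    moreover have "measure_pmf.expectation (cond_pmf p {xs. proj J' xs = b(i:=c)}) (\<lambda>xs. g' (proj I' xs))
       = measure_pmf.expectation (cond_pmf p {xs. proj J' xs = b(i:=c)}) (\<lambda>xs. g (proj I xs))"
    proof (rule E_cong)
      fix x assume x: "x \<in> set_pmf (cond_pmf p {xs. proj J' xs = b(i:=c)})"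
      have ne: "set_pmf p \<inter> {xs. proj J' xs = b(i:=c)} \<noteq> {}" using nb eqb by simp
      have "x \<in> {xs. proj J' xs = b(i:=c)}" using x set_cond_pmf[OF ne] by auto
      hence "x!i = c" using eqb by (auto simp: F_def)
      thus "g' (proj I' x) = g (proj I x)" using gg by simp
    qed
    ultimately show ?thesis unfolding F_def[symmetric] ca cb eqa eqb by simp
  qed
qed

lemma lip_dist_aux:
  assumes lip: "lipschitz1 n f"
  shows "\<forall>xs. length xs = n \<longrightarrow> length ys = n \<longrightarrow> card {j. j<n \<and> xs!j \<noteq> ys!j} = m
     \<longrightarrow> \<bar>f xs - f ys\<bar> \<le> real m"
proof (induction m)
  case 0
  show ?case
  proof (intro allI impI)
    fix xs assume h: "length xs = n" "length ys = n" "card {j. j<n \<and> xs!j \<noteq> ys!j} = 0"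
    have "{j. j<n \<and> xs!j \<noteq> ys!j} = {}" using h(3) by (simp add: card_eq_0_iff)
    hence "xs = ys" using h by (intro nth_equalityI) auto
    thus "\<bar>f xs - f ys\<bar> \<le> real 0" by simp
  qed
next
  case (Suc m)
  show ?case
  proof (intro allI impI)
    fix xs assume h: "length xs = n" "length ys = n" "card {j. j<n \<and> xs!j \<noteq> ys!j} = Suc m"
    obtain j where j: "j \<in> {j. j<n \<and> xs!j \<noteq> ys!j}" using h(3)
      by (metis card.empty ex_in_conv nat.distinct(1))
    define xs' where "xs' = xs[j := ys!j]"
    have D: "{k. k<n \<and> xs'!k \<noteq> ys!k} = {k. k<n \<and> xs!k \<noteq> ys!k} - {j}"
      using j h by (auto simp: xs'_def nth_list_update)
    have "card {k. k<n \<and> xs'!k \<noteq> ys!k} = m" unfolding D using h(3) j by simp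
    hence 1: "\<bar>f xs' - f ys\<bar> \<le> real m" using Suc.IH h by (simp add: xs'_def)
    have 2: "\<bar>f xs - f xs'\<bar> \<le> 1" using lip h j unfolding lipschitz1_def xs'_def by blast
    show "\<bar>f xs - f ys\<bar> \<le> real (Suc m)" using 1 2 by simp
  qed
qed

lemma lip_dist:
  assumes "lipschitz1 n f" "length xs = n" "length ys = n"
  shows "\<bar>f xs - f ys\<bar> \<le> real (card {j. j<n \<and> xs!j \<noteq> ys!j})"
  using lip_dist_aux[OF assms(1)] assms(2,3) by blast

definition rb :: "nat \<Rightarrow> nat \<Rightarrow> bool \<Rightarrow> (nat \<Rightarrow> bool) \<Rightarrow> bool list" where
  "rb n i b z = map (\<lambda>j. if j = i then b else z j) [0..<n]"

definition cnt :: "nat set \<Rightarrow> (nat \<Rightarrow> bool) \<Rightarrow> real" where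
  "cnt I z = (\<Sum>j\<in>I. if z j then 1 else 0)"

definition ind :: "nat \<Rightarrow> bool list \<Rightarrow> real" where
  "ind i xs = (if xs!i then 1 else 0)"

definition ssum :: "nat \<Rightarrow> bool list \<Rightarrow> real" where
  "ssum n xs = (\<Sum>j<n. ind j xs)"

lemma rb_proj: "length xs = n \<Longrightarrow> rb n i b (proj ({..<n}-{i}) xs) = xs[i:=b]"
  by (intro nth_equalityI) (auto simp: rb_def proj_def nth_list_update)

lemma cnt_proj: "length xs = n \<Longrightarrow> i < n \<Longrightarrow> cnt ({..<n}-{i}) (proj ({..<n}-{i}) xs) = ssum n xs - ind i xs"
proof -
  assume "length xs = n" "i < n"
  have "ssum n xs = ind i xs + (\<Sum>j\<in>{..<n}-{i}. ind j xs)"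
    unfolding ssum_def using \<open>i<n\<close> by (simp add: sum.remove)
  moreover have "cnt ({..<n}-{i}) (proj ({..<n}-{i}) xs) = (\<Sum>j\<in>{..<n}-{i}. ind j xs)"
    unfolding cnt_def ind_def by (rule sum.cong) (auto simp: proj_def)
  ultimately show ?thesis by simp
qed

lemma cnt_diff:
  assumes "finite I" "z \<le> z'"
  shows "cnt I z' - cnt I z = real (card {j\<in>I. z j \<noteq> z' j})"
proof -
  have "cnt I z' - cnt I z = (\<Sum>j\<in>I. if z j \<noteq> z' j then 1 else 0)"
    unfolding cnt_def sum_subtractf[symmetric] using assms(2)
    by (intro sum.cong) (auto simp: le_fun_def)
  also have "\<dots> = real (card {j\<in>I. z j \<noteq> z' j})"
    using assms(1) by (simp add: sum.If_cases Int_def conj_commute)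
  finally show ?thesis .
qed

lemma rb_dist:
  assumes "i < n" "z \<in> assignments ({..<n}-{i})" "z' \<in> assignments ({..<n}-{i})"
  shows "{j. j<n \<and> rb n i b z ! j \<noteq> rb n i b z' ! j} = {j\<in>{..<n}-{i}. z j \<noteq> z' j}"
  using assms by (auto simp: rb_def)

lemma G_mono:
  assumes lip: "lipschitz1 n f" and i: "i < n" and s: "s = 1 \<or> s = -1"
  shows "mono_on (assignments ({..<n}-{i})) (\<lambda>z. s * f (rb n i b z) + cnt ({..<n}-{i}) z)"
proof (rule mono_onI)
  fix z z' assume z: "z \<in> assignments ({..<n}-{i})" "z' \<in> assignments ({..<n}-{i})" "z \<le> z'"
  have d: "\<bar>f (rb n i b z) - f (rb n i b z')\<bar> \<le> real (card {j\<in>{..<n}-{i}. z j \<noteq> z' j})"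
    using lip_dist[OF lip, of "rb n i b z" "rb n i b z'"] rb_dist[OF i z(1,2)] by (simp add: rb_def)
  have c: "cnt ({..<n}-{i}) z' - cnt ({..<n}-{i}) z = real (card {j\<in>{..<n}-{i}. z j \<noteq> z' j})"
    using cnt_diff[OF _ z(3)] by simp
  show "s * f (rb n i b z) + cnt ({..<n}-{i}) z \<le> s * f (rb n i b z') + cnt ({..<n}-{i}) z'"
    using s d c by (auto simp: abs_le_iff)
qed

lemma H_mono:
  assumes mono: "monotone_fun n f"
  shows "mono_on (assignments ({..<n}-{i})) (\<lambda>z. f (rb n i b z))"
proof (rule mono_onI)
  fix z z' :: "nat \<Rightarrow> bool" assume z: "z \<le> z'"
  have "list_all2 (\<le>) (rb n i b z) (rb n i b z')"
    using z by (auto simp: rb_def list_all2_conv_all_nth le_fun_def)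
  thus "f (rb n i b z) \<le> f (rb n i b z')" using mono unfolding monotone_fun_def by (simp add: rb_def)
qed

lemma E_mono: fixes h k :: "'a \<Rightarrow> real" shows "finite (set_pmf q) \<Longrightarrow> (\<And>x. x \<in> set_pmf q \<Longrightarrow> h x \<le> k x) \<Longrightarrow>
   measure_pmf.expectation q h \<le> measure_pmf.expectation q k"
  by (simp add: E_fin sum_mono mult_right_mono pmf_nonneg)

lemma E_lin: fixes h k :: "'a \<Rightarrow> real" shows "finite (set_pmf q) \<Longrightarrow>
  measure_pmf.expectation q (\<lambda>x. s * h x + k x - d) = s * measure_pmf.expectation q h + measure_pmf.expectation q k - d"
  by (simp add: integrable_measure_pmf_finite)

lemma E_sub: fixes h k :: "'a \<Rightarrow> real" shows "finite (set_pmf q) \<Longrightarrow>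
  measure_pmf.expectation q (\<lambda>x. h x - k x) = measure_pmf.expectation q h - measure_pmf.expectation q k"
  by (simp add: integrable_measure_pmf_finite)

lemma key:
  fixes p :: "bool list pmf" and n i :: nat and f :: "bool list \<Rightarrow> real"
  defines "c1 \<equiv> cond_pmf p {xs. xs!i = True}" and "c0 \<equiv> cond_pmf p {xs. xs!i = False}"
  assumes sup: "set_pmf p \<subseteq> {xs. length xs = n}" and nr: "neg_regression n p"
    and lip: "lipschitz1 n f" and i: "i < n"
    and ne1: "set_pmf p \<inter> {xs. xs!i = True} \<noteq> {}" and ne0: "set_pmf p \<inter> {xs. xs!i = False} \<noteq> {}"
    and S: "measure_pmf.expectation c0 (ssum n) \<le> measure_pmf.expectation c1 (ssum n)"
  shows "\<bar>measure_pmf.expectation c1 f - measure_pmf.expectation c0 f\<bar> \<le> 2 \<and>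
     (monotone_fun n f \<longrightarrow> \<bar>measure_pmf.expectation c1 f - measure_pmf.expectation c0 f\<bar> \<le> 1)"
proof -
  define I where "I = {..<n} - {i}"
  define a0 :: "nat \<Rightarrow> bool" where "a0 = (\<lambda>j. False)"
  define b1 :: "nat \<Rightarrow> bool" where "b1 = (\<lambda>j. j = i)"
  define h0 where "h0 = (\<lambda>xs::bool list. f (xs[i:=False]))"
  have fin: "finite (set_pmf p)" using sup finite_len finite_subset by blast
  have s1: "x \<in> set_pmf c1 \<Longrightarrow> length x = n \<and> x!i" for x
    using sup set_cond_pmf[OF ne1] unfolding c1_def by auto
  have s0: "x \<in> set_pmf c0 \<Longrightarrow> length x = n \<and> \<not> x!i" for x
    using sup set_cond_pmf[OF ne0] unfolding c0_def by auto
  have fin1: "finite (set_pmf c1)" using fin set_cond_pmf[OF ne1] unfolding c1_def by simp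
  have fin0: "finite (set_pmf c0)" using fin set_cond_pmf[OF ne0] unfolding c0_def by simp
  have eq0: "{xs. proj {i} xs = a0} = {xs. xs!i = False}"
    by (auto simp: proj_def fun_eq_iff a0_def)
  have eq1: "{xs. proj {i} xs = b1} = {xs. xs!i = True}"
    by (auto simp: proj_def fun_eq_iff b1_def)
  have NR: "measure_pmf.expectation c1 (\<lambda>xs. g (proj I xs)) \<le> measure_pmf.expectation c0 (\<lambda>xs. g (proj I xs))"
    if g: "mono_on (assignments I) g" for g :: "(nat \<Rightarrow> bool) \<Rightarrow> real"
  proof -
    have "I \<subseteq> {..<n}" "{i} \<subseteq> {..<n}" "I \<inter> {i} = {}" using i by (auto simp: I_def)
    moreover have "a0 \<in> assignments {i}" "b1 \<in> assignments {i}" "a0 \<le> b1"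
      by (auto simp: assignments_def a0_def b1_def le_fun_def)
    moreover have "0 < measure_pmf.prob p {xs. proj {i} xs = a0}" unfolding eq0 using ne0
      by (auto intro: measure_pmf_posI)
    moreover have "0 < measure_pmf.prob p {xs. proj {i} xs = b1}" unfolding eq1 using ne1
      by (auto intro: measure_pmf_posI)
    ultimately have "measure_pmf.expectation (cond_pmf p {xs. proj {i} xs = b1}) (\<lambda>xs. g (proj I xs))
       \<le> measure_pmf.expectation (cond_pmf p {xs. proj {i} xs = a0}) (\<lambda>xs. g (proj I xs))"
      using nr[unfolded neg_regression_def, rule_format, of I "{i}" g a0 b1] g by blast
    thus ?thesis unfolding eq0 eq1 c0_def c1_def .
  qed
  have Gs: "s * measure_pmf.expectation c1 h0 + measure_pmf.expectation c1 (ssum n) - 1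
        \<le> s * measure_pmf.expectation c0 h0 + measure_pmf.expectation c0 (ssum n) - 0"
    if s: "s = 1 \<or> s = -1" for s
  proof -
    have m: "mono_on (assignments I) (\<lambda>z. s * f (rb n i False z) + cnt I z)"
      unfolding I_def by (rule G_mono[OF lip i s])
    have e1: "measure_pmf.expectation c1 (\<lambda>xs. s * f (rb n i False (proj I xs)) + cnt I (proj I xs))
        = measure_pmf.expectation c1 (\<lambda>xs. s * h0 xs + ssum n xs - 1)"
      by (rule E_cong) (use s1 i in \<open>auto simp: I_def rb_proj cnt_proj h0_def ind_def\<close>)
    have e0: "measure_pmf.expectation c0 (\<lambda>xs. s * f (rb n i False (proj I xs)) + cnt I (proj I xs))
        = measure_pmf.expectation c0 (\<lambda>xs. s * h0 xs + ssum n xs - 0)"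
      by (rule E_cong) (use s0 i in \<open>auto simp: I_def rb_proj cnt_proj h0_def ind_def\<close>)
    have l1: "measure_pmf.expectation c1 (\<lambda>xs. s * h0 xs + ssum n xs - 1) = s * measure_pmf.expectation c1 h0 + measure_pmf.expectation c1 (ssum n) - 1"
      by (rule E_lin[OF fin1])
    have l0: "measure_pmf.expectation c0 (\<lambda>xs. s * h0 xs + ssum n xs - 0) = s * measure_pmf.expectation c0 h0 + measure_pmf.expectation c0 (ssum n) - 0"
      by (rule E_lin[OF fin0])
    show ?thesis using NR[OF m] e1 e0 l1 l0 by linarith
  qed
  have G1: "measure_pmf.expectation c1 h0 - measure_pmf.expectation c0 h0 \<le> 1" using Gs[of 1] S by simp
  have G2: "measure_pmf.expectation c1 h0 - measure_pmf.expectation c0 h0 \<ge> -1" using Gs[of "-1"] S by simp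
  have f0: "measure_pmf.expectation c0 f = measure_pmf.expectation c0 h0"
  proof (rule E_cong)
    fix x assume "x \<in> set_pmf c0"
    hence "\<not> x!i" using s0 by blast
    hence "x[i:=False] = x" by (metis (full_types) list_update_id)
    thus "f x = h0 x" by (simp add: h0_def)
  qed
  have d1: "\<bar>f x - h0 x\<bar> \<le> 1" if "x \<in> set_pmf c1" for x
    using lip s1[OF that] i unfolding lipschitz1_def h0_def by blast
  have F1: "\<bar>measure_pmf.expectation c1 f - measure_pmf.expectation c1 h0\<bar> \<le> 1"
  proof -
    have "measure_pmf.expectation c1 (\<lambda>x. f x - h0 x) \<le> measure_pmf.expectation c1 (\<lambda>x. 1)"
      using d1 by (intro E_mono[OF fin1]) (auto simp: abs_le_iff)
    moreover have "measure_pmf.expectation c1 (\<lambda>x. -1) \<le> measure_pmf.expectation c1 (\<lambda>x. f x - h0 x)"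
      using d1 by (intro E_mono[OF fin1]) (smt (verit))
    ultimately show ?thesis using E_sub[OF fin1, of f h0] by (simp add: abs_le_iff)
  qed
  have part1: "\<bar>measure_pmf.expectation c1 f - measure_pmf.expectation c0 f\<bar> \<le> 2"
    using G1 G2 F1 f0 by (simp add: abs_le_iff)
  have part2: "\<bar>measure_pmf.expectation c1 f - measure_pmf.expectation c0 f\<bar> \<le> 1" if mono: "monotone_fun n f"
  proof -
    have H: "measure_pmf.expectation c1 h0 \<le> measure_pmf.expectation c0 h0"
    proof -
      have m: "mono_on (assignments I) (\<lambda>z. f (rb n i False z))"
        unfolding I_def by (rule H_mono[OF mono])
      have e1: "measure_pmf.expectation c1 (\<lambda>xs. f (rb n i False (proj I xs))) = measure_pmf.expectation c1 h0"
        by (rule E_cong) (use s1 in \<open>auto simp: I_def rb_proj h0_def\<close>)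
      have e0: "measure_pmf.expectation c0 (\<lambda>xs. f (rb n i False (proj I xs))) = measure_pmf.expectation c0 h0"
        by (rule E_cong) (use s0 in \<open>auto simp: I_def rb_proj h0_def\<close>)
      show ?thesis using NR[OF m] e1 e0 by simp
    qed
    have "h0 x \<le> f x" if "x \<in> set_pmf c1" for x
    proof -
      have "list_all2 (\<le>) (x[i:=False]) x" using s1[OF that]
        by (auto simp: list_all2_conv_all_nth) (metis nth_list_update_neq)
      thus ?thesis using mono s1[OF that] unfolding monotone_fun_def h0_def by simp
    qed
    hence "measure_pmf.expectation c1 h0 \<le> measure_pmf.expectation c1 f" by (intro E_mono[OF fin1])
    thus ?thesis using G2 H F1 f0 by (simp add: abs_le_iff)
  qed
  show ?thesis using part1 part2 by blast
qed

lemma decomp: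
  fixes p :: "bool list pmf" and h :: "bool list \<Rightarrow> real"
  assumes fin: "finite (set_pmf p)"
    and ne1: "set_pmf p \<inter> {xs. xs!i = True} \<noteq> {}" and ne0: "set_pmf p \<inter> {xs. xs!i = False} \<noteq> {}"
  shows "measure_pmf.expectation p (\<lambda>x. ind i x * h x)
           = measure_pmf.prob p {xs. xs!i = True} * measure_pmf.expectation (cond_pmf p {xs. xs!i = True}) h"
    and "measure_pmf.expectation p h
           = measure_pmf.prob p {xs. xs!i = True} * measure_pmf.expectation (cond_pmf p {xs. xs!i = True}) h
           + measure_pmf.prob p {xs. xs!i = False} * measure_pmf.expectation (cond_pmf p {xs. xs!i = False}) h"
    and "measure_pmf.prob p {xs. xs!i = True} + measure_pmf.prob p {xs. xs!i = False} = 1"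
proof -
  let ?T = "{xs::bool list. xs!i = True}" and ?F = "{xs::bool list. xs!i = False}"
  have p1: "measure_pmf.prob p ?T > 0" using ne1 by (auto intro: measure_pmf_posI)
  have p0: "measure_pmf.prob p ?F > 0" using ne0 by (auto intro: measure_pmf_posI)
  have c1: "measure_pmf.prob p ?T * measure_pmf.expectation (cond_pmf p ?T) h = (\<Sum>x\<in>set_pmf p \<inter> ?T. h x * pmf p x)"
    using E_cond[OF fin p1, of h] p1 by simp
  have c0: "measure_pmf.prob p ?F * measure_pmf.expectation (cond_pmf p ?F) h = (\<Sum>x\<in>set_pmf p \<inter> ?F. h x * pmf p x)"
    using E_cond[OF fin p0, of h] p0 by simp
  have sT: "(\<Sum>x\<in>set_pmf p \<inter> ?T. k x) = (\<Sum>x\<in>set_pmf p. if x!i then k x else 0)" for k :: "bool list \<Rightarrow> real"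
    by (subst sum.inter_restrict[OF fin]) simp
  have sF: "(\<Sum>x\<in>set_pmf p \<inter> ?F. k x) = (\<Sum>x\<in>set_pmf p. if x!i then 0 else k x)" for k :: "bool list \<Rightarrow> real"
    by (subst sum.inter_restrict[OF fin]) (rule sum.cong, auto)
  have split: "(\<Sum>x\<in>set_pmf p. k x) = (\<Sum>x\<in>set_pmf p \<inter> ?T. k x) + (\<Sum>x\<in>set_pmf p \<inter> ?F. k x)"
    for k :: "bool list \<Rightarrow> real"
    unfolding sT sF sum.distrib[symmetric] by (rule sum.cong) auto
  show "measure_pmf.expectation p (\<lambda>x. ind i x * h x)
           = measure_pmf.prob p ?T * measure_pmf.expectation (cond_pmf p ?T) h"
    unfolding c1 E_fin[OF fin] sT by (rule sum.cong) (auto simp: ind_def)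
  show "measure_pmf.expectation p h
           = measure_pmf.prob p ?T * measure_pmf.expectation (cond_pmf p ?T) h
           + measure_pmf.prob p ?F * measure_pmf.expectation (cond_pmf p ?F) h"
    unfolding c1 c0 E_fin[OF fin] by (rule split)
  show "measure_pmf.prob p ?T + measure_pmf.prob p ?F = 1"
    unfolding P_fin[OF fin] split[symmetric] by (rule sum_pmf_eq_1[OF fin]) simp
qed

definition nc :: "nat \<Rightarrow> bool list pmf \<Rightarrow> nat set" where
  "nc n p = {i. i < n \<and> (\<exists>x\<in>set_pmf p. \<exists>y\<in>set_pmf p. x!i \<noteq> y!i)}"

lemma nc_ne:
  assumes "i \<in> nc n p"
  shows "set_pmf p \<inter> {xs. xs!i = True} \<noteq> {}" "set_pmf p \<inter> {xs. xs!i = False} \<noteq> {}"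
proof -
  obtain x y where xy: "x \<in> set_pmf p" "y \<in> set_pmf p" "x!i \<noteq> y!i" using assms unfolding nc_def by blast
  show "set_pmf p \<inter> {xs. xs!i = True} \<noteq> {}" using xy by (cases "x!i") auto
  show "set_pmf p \<inter> {xs. xs!i = False} \<noteq> {}" using xy by (cases "x!i") auto
qed

lemma good_i:
  assumes sup: "set_pmf p \<subseteq> {xs. length xs = n}" and ne: "nc n p \<noteq> {}"
  shows "\<exists>i\<in>nc n p. measure_pmf.expectation (cond_pmf p {xs. xs!i = False}) (ssum n)
                    \<le> measure_pmf.expectation (cond_pmf p {xs. xs!i = True}) (ssum n)"
proof (rule ccontr)
  assume contra: "\<not> ?thesis"
  have fin: "finite (set_pmf p)" using sup finite_len finite_subset by blast
  define Cov where "Cov = (\<lambda>i. measure_pmf.expectation p (\<lambda>x. ind i x * ssum n x)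
       - measure_pmf.expectation p (ind i) * measure_pmf.expectation p (ssum n))"
  have neg: "Cov i < 0" if "i \<in> nc n p" for i
  proof -
    note ne = nc_ne[OF that]
    define q1 where "q1 = measure_pmf.prob p {xs. xs!i = True}"
    define q0 where "q0 = measure_pmf.prob p {xs. xs!i = False}"
    define e1 where "e1 = measure_pmf.expectation (cond_pmf p {xs. xs!i = True}) (ssum n)"
    define e0 where "e0 = measure_pmf.expectation (cond_pmf p {xs. xs!i = False}) (ssum n)"
    have "e1 < e0" using contra that unfolding e0_def e1_def by auto
    have q1: "q1 > 0" using ne(1) unfolding q1_def by (auto intro: measure_pmf_posI)
    have q0: "q0 > 0" using ne(2) unfolding q0_def by (auto intro: measure_pmf_posI)
    have a: "measure_pmf.expectation p (\<lambda>x. ind i x * ssum n x) = q1 * e1"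
      using decomp(1)[OF fin ne] unfolding q1_def e1_def .
    have b: "measure_pmf.expectation p (ssum n) = q1 * e1 + q0 * e0"
      using decomp(2)[OF fin ne] unfolding q1_def e1_def q0_def e0_def .
    have c: "measure_pmf.expectation p (ind i) = q1"
      using decomp(1)[OF fin ne, of "\<lambda>_. 1"] unfolding q1_def by simp
    have s: "q1 + q0 = 1" using decomp(3)[OF fin ne] unfolding q1_def q0_def .
    have qq: "q1 = 1 - q0" using s by simp
    have "Cov i = q1 * e1 - q1 * (q1 * e1 + q0 * e0)"
      unfolding Cov_def a b c by simp
    also have "\<dots> = q1 * q0 * (e1 - e0)"
      unfolding qq by (simp add: algebra_simps)
    also have "\<dots> < 0" using q1 q0 \<open>e1 < e0\<close> by (simp add: mult_pos_neg)
    finally show ?thesis .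
  qed
  have zero: "Cov i = 0" if "i < n" "i \<notin> nc n p" for i
  proof -
    obtain x0 where x0: "x0 \<in> set_pmf p" using set_pmf_not_empty[of p] by blast
    have k: "ind i x = ind i x0" if "x \<in> set_pmf p" for x
    proof -
      have "x!i = x0!i" using \<open>i<n\<close> \<open>i \<notin> nc n p\<close> that x0 unfolding nc_def by blast
      thus ?thesis by (simp add: ind_def)
    qed
    have "measure_pmf.expectation p (\<lambda>x. ind i x * ssum n x) = measure_pmf.expectation p (\<lambda>x. ind i x0 * ssum n x)"
      by (rule E_cong) (simp add: k)
    moreover have "measure_pmf.expectation p (ind i) = measure_pmf.expectation p (\<lambda>x. ind i x0)"
      by (rule E_cong) (simp add: k)
    ultimately show ?thesis unfolding Cov_def by simp
  qed
  have ncsub: "nc n p \<subseteq> {..<n}" unfolding nc_def by auto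
  have "(\<Sum>i<n. Cov i) < (\<Sum>i<n. 0)"
  proof (rule sum_strict_mono_ex1)
    show "\<forall>i\<in>{..<n}. Cov i \<le> 0"
    proof
      fix i assume "i \<in> {..<n}"
      thus "Cov i \<le> 0" using neg[of i] zero[of i] by (cases "i \<in> nc n p") auto
    qed
    show "\<exists>i\<in>{..<n}. Cov i < 0" using neg ne ncsub by blast
  qed simp
  moreover have "(\<Sum>i<n. Cov i) \<ge> 0"
  proof -
    have s1: "(\<Sum>i<n. measure_pmf.expectation p (\<lambda>x. ind i x * ssum n x)) = measure_pmf.expectation p (\<lambda>x. (ssum n x)\<^sup>2)"
    proof -
      have "(\<Sum>i<n. \<Sum>x\<in>set_pmf p. ind i x * ssum n x * pmf p x) = (\<Sum>x\<in>set_pmf p. \<Sum>i<n. ind i x * ssum n x * pmf p x)"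
        by (rule sum.swap)
      also have "\<dots> = (\<Sum>x\<in>set_pmf p. (\<Sum>i<n. ind i x) * ssum n x * pmf p x)"
        by (simp add: sum_distrib_right)
      also have "\<dots> = (\<Sum>x\<in>set_pmf p. (ssum n x)\<^sup>2 * pmf p x)"
        by (simp add: ssum_def[symmetric] power2_eq_square)
      finally show ?thesis unfolding E_fin[OF fin] .
    qed
    have s2: "(\<Sum>i<n. measure_pmf.expectation p (ind i)) = measure_pmf.expectation p (ssum n)"
    proof -
      have "(\<Sum>i<n. \<Sum>x\<in>set_pmf p. ind i x * pmf p x) = (\<Sum>x\<in>set_pmf p. \<Sum>i<n. ind i x * pmf p x)"
        by (rule sum.swap)
      also have "\<dots> = (\<Sum>x\<in>set_pmf p. (\<Sum>i<n. ind i x) * pmf p x)"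
        by (simp add: sum_distrib_right)
      also have "\<dots> = (\<Sum>x\<in>set_pmf p. ssum n x * pmf p x)"
        by (simp add: ssum_def[symmetric])
      finally show ?thesis unfolding E_fin[OF fin] .
    qed
    have "(\<Sum>i<n. Cov i) = measure_pmf.expectation p (\<lambda>x. (ssum n x)\<^sup>2) - (measure_pmf.expectation p (ssum n))\<^sup>2"
      unfolding Cov_def sum_subtractf s1 sum_distrib_right[symmetric] s2 by (simp add: power2_eq_square)
    also have "\<dots> = measure_pmf.variance p (ssum n)"
      by (rule measure_pmf.variance_eq[symmetric]) (simp_all add: integrable_measure_pmf_finite fin)
    also have "\<dots> \<ge> 0" by simp
    finally show ?thesis .
  qed
  ultimately show False by simp
qed

lemma two_point_aux:
  fixes q l x y :: real
  assumes q: "0 \<le> q" "q \<le> 1" and h: "l * (x - y) \<ge> 0"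
  shows "q * exp (l * x) + (1 - q) * exp (l * y) \<le> exp (l * (q * x + (1 - q) * y) + l\<^sup>2 * (x - y)\<^sup>2 / 8)"
proof -
  define h where "h = l * (x - y)"
  have h0: "h \<ge> 0" using assms unfolding h_def by simp
  have aux: "- h * q + ln (1 + q * (exp h - 1)) \<le> h\<^sup>2 / 8"
    using Hoeffdings_lemma_aux[OF h0 q(1)] by simp
  have "exp h \<ge> 1" using h0 by simp
  hence "q * (exp h - 1) \<ge> 0" using q by simp
  hence upos: "1 + q * (exp h - 1) > 0" by linarith
  have "ln (1 + q * (exp h - 1)) \<le> h * q + h\<^sup>2 / 8" using aux by simp
  hence "exp (ln (1 + q * (exp h - 1))) \<le> exp (h * q + h\<^sup>2 / 8)" by (simp only: exp_le_cancel_iff)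
  hence u: "1 + q * (exp h - 1) \<le> exp (h * q + h\<^sup>2 / 8)" using upos by simp
  have ex: "exp (l * x) = exp (l * y) * exp h" unfolding h_def by (simp add: exp_add[symmetric] algebra_simps)
  have "q * exp (l * x) + (1 - q) * exp (l * y) = exp (l * y) * (1 + q * (exp h - 1))"
    unfolding ex by (simp add: algebra_simps)
  also have "\<dots> \<le> exp (l * y) * exp (h * q + h\<^sup>2 / 8)" using u by simp
  also have "\<dots> = exp (l * y + h * q + h\<^sup>2 / 8)" by (simp add: exp_add[symmetric])
  also have "l * y + h * q + h\<^sup>2 / 8 = l * (q * x + (1 - q) * y) + l\<^sup>2 * (x - y)\<^sup>2 / 8"
    unfolding h_def by (simp add: algebra_simps power2_eq_square)
  finally show ?thesis .
qed

lemma two_point: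
  fixes q l x y :: real
  assumes q: "0 \<le> q" "q \<le> 1"
  shows "q * exp (l * x) + (1 - q) * exp (l * y) \<le> exp (l * (q * x + (1 - q) * y) + l\<^sup>2 * (x - y)\<^sup>2 / 8)"
proof (cases "l * (x - y) \<ge> 0")
  case True thus ?thesis using two_point_aux[OF q] by blast
next
  case False
  hence "l * (y - x) \<ge> 0" by (simp add: algebra_simps)
  from two_point_aux[of "1 - q" l y x, OF _ _ this] q
  have "(1 - q) * exp (l * y) + q * exp (l * x) \<le> exp (l * ((1 - q) * y + q * x) + l\<^sup>2 * (y - x)\<^sup>2 / 8)"
    by simp
  moreover have "(1 - q) * exp (l * y) + q * exp (l * x) = q * exp (l * x) + (1 - q) * exp (l * y)" by simp
  moreover have "l * ((1 - q) * y + q * x) + l\<^sup>2 * (y - x)\<^sup>2 / 8 = l * (q * x + (1 - q) * y) + l\<^sup>2 * (x - y)\<^sup>2 / 8"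
    by (simp add: power2_eq_square algebra_simps)
  ultimately show ?thesis by simp
qed

lemma nc_sub: "nc n p \<subseteq> {..<n}" unfolding nc_def by auto

lemma point_E:
  assumes sup: "set_pmf p \<subseteq> {xs. length xs = n}" and nc0: "nc n p = {}"
  obtains x0 where "\<And>h::bool list \<Rightarrow> real. measure_pmf.expectation p h = h x0"
proof -
  obtain x0 where x0: "x0 \<in> set_pmf p" using set_pmf_not_empty[of p] by blast
  have eq: "x = x0" if "x \<in> set_pmf p" for x
  proof (rule nth_equalityI)
    show "length x = length x0" using sup that x0 by auto
    fix j assume "j < length x"
    hence "j < n" using sup that by auto
    thus "x!j = x0!j" using nc0 that x0 unfolding nc_def by blast
  qed
  hence S: "set_pmf p = {x0}" using x0 by blast
  have "pmf p x0 = 1" using sum_pmf_eq_1[of "{x0}" p] S by simp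
  hence "measure_pmf.expectation p h = h x0" for h :: "bool list \<Rightarrow> real"
    using E_fin[of p h] S by simp
  thus ?thesis using that by blast
qed

lemma mgf:
  fixes f :: "bool list \<Rightarrow> real" and c l :: real
  assumes lip: "lipschitz1 n f" and HC: "c = 2 \<or> (c = 1 \<and> monotone_fun n f)"
  shows "\<forall>p. set_pmf p \<subseteq> {xs. length xs = n} \<longrightarrow> neg_regression n p \<longrightarrow> card (nc n p) \<le> k \<longrightarrow>
     measure_pmf.expectation p (\<lambda>x. exp (l * f x)) \<le> exp (l * measure_pmf.expectation p f + l\<^sup>2 * c\<^sup>2 * real k / 8)"
proof (induction k)
  case 0
  show ?case
  proof (intro allI impI)
    fix p :: "bool list pmf"
    assume sup: "set_pmf p \<subseteq> {xs. length xs = n}" and "neg_regression n p" and "card (nc n p) \<le> 0"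
    hence "nc n p = {}" using nc_sub[of n p] by (simp add: finite_subset card_eq_0_iff)
    then obtain x0 where E: "\<And>h::bool list \<Rightarrow> real. measure_pmf.expectation p h = h x0"
      using point_E[OF sup] by blast
    show "measure_pmf.expectation p (\<lambda>x. exp (l * f x)) \<le> exp (l * measure_pmf.expectation p f + l\<^sup>2 * c\<^sup>2 * real 0 / 8)"
      unfolding E by simp
  qed
next
  case (Suc k)
  show ?case
  proof (intro allI impI)
    fix p :: "bool list pmf"
    assume sup: "set_pmf p \<subseteq> {xs. length xs = n}" and nr: "neg_regression n p" and card: "card (nc n p) \<le> Suc k"
    define K where "K = l\<^sup>2 * c\<^sup>2 * real k / 8"
    have Kmono: "K \<le> l\<^sup>2 * c\<^sup>2 * real (Suc k) / 8" unfolding K_def by (simp add: divide_right_mono mult_left_mono)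
    have fin: "finite (set_pmf p)" using sup finite_len finite_subset by blast
    show "measure_pmf.expectation p (\<lambda>x. exp (l * f x)) \<le> exp (l * measure_pmf.expectation p f + l\<^sup>2 * c\<^sup>2 * real (Suc k) / 8)"
    proof (cases "card (nc n p) \<le> k")
      case True
      hence "measure_pmf.expectation p (\<lambda>x. exp (l * f x)) \<le> exp (l * measure_pmf.expectation p f + K)"
        using Suc.IH sup nr unfolding K_def by blast
      also have "\<dots> \<le> exp (l * measure_pmf.expectation p f + l\<^sup>2 * c\<^sup>2 * real (Suc k) / 8)"
        using Kmono by simp
      finally show ?thesis .
    next
      case False
      hence cardeq: "card (nc n p) = Suc k" using card by simp
      hence nene: "nc n p \<noteq> {}" by auto
      obtain i where i: "i \<in> nc n p" and S:
        "measure_pmf.expectation (cond_pmf p {xs. xs!i = False}) (ssum n)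
          \<le> measure_pmf.expectation (cond_pmf p {xs. xs!i = True}) (ssum n)"
        using good_i[OF sup nene] by blast
      have iln: "i < n" using i nc_sub by blast
      note ne = nc_ne[OF i]
      define c1 where "c1 = cond_pmf p {xs. xs!i = True}"
      define c0 where "c0 = cond_pmf p {xs. xs!i = False}"
      define q1 where "q1 = measure_pmf.prob p {xs. xs!i = True}"
      define q0 where "q0 = measure_pmf.prob p {xs. xs!i = False}"
      define a1 where "a1 = measure_pmf.expectation c1 f"
      define a0 where "a0 = measure_pmf.expectation c0 f"
      have IHb: "measure_pmf.expectation (cond_pmf p {xs. xs!i = b}) (\<lambda>x. exp (l * f x))
          \<le> exp (l * measure_pmf.expectation (cond_pmf p {xs. xs!i = b}) f + K)"
        if nb: "set_pmf p \<inter> {xs. xs!i = b} \<noteq> {}" for b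
      proof -
        let ?c = "cond_pmf p {xs. xs!i = b}"
        have sb: "set_pmf ?c = set_pmf p \<inter> {xs. xs!i = b}" by (rule set_cond_pmf[OF nb])
        have sup': "set_pmf ?c \<subseteq> {xs. length xs = n}" using sup sb by auto
        have nr': "neg_regression n ?c" by (rule nr_cond[OF sup nr iln nb])
        have sub: "nc n ?c \<subseteq> nc n p - {i}"
          unfolding nc_def sb by auto
        have "card (nc n ?c) \<le> card (nc n p - {i})"
          by (rule card_mono[OF _ sub]) (meson finite_Diff finite_lessThan finite_subset nc_sub)
        also have "\<dots> = k" using cardeq i nc_sub[of n p] by (simp add: finite_subset)
        finally have "card (nc n ?c) \<le> k" .
        thus ?thesis using Suc.IH sup' nr' unfolding K_def by blast
      qed
      have q: "q1 + q0 = 1" using decomp(3)[OF fin ne] unfolding q1_def q0_def .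
      have q1nn: "q1 \<ge> 0" "q0 \<ge> 0" unfolding q1_def q0_def by simp_all
      have Ef: "measure_pmf.expectation p f = q1 * a1 + q0 * a0"
        using decomp(2)[OF fin ne, of f] unfolding q1_def q0_def a1_def a0_def c1_def c0_def .
      have kb: "\<bar>a1 - a0\<bar> \<le> c"
        using key[OF sup nr lip iln ne S] HC unfolding a1_def a0_def c1_def c0_def by auto
      have c0le: "c \<ge> 0" using HC by auto
      have sq: "(a1 - a0)\<^sup>2 \<le> c\<^sup>2"
        using kb c0le by (metis abs_ge_zero power2_abs power_mono)
      have "measure_pmf.expectation p (\<lambda>x. exp (l * f x))
          = q1 * measure_pmf.expectation c1 (\<lambda>x. exp (l * f x)) + q0 * measure_pmf.expectation c0 (\<lambda>x. exp (l * f x))"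
        using decomp(2)[OF fin ne] unfolding q1_def q0_def c1_def c0_def .
      also have "\<dots> \<le> q1 * exp (l * a1 + K) + q0 * exp (l * a0 + K)"
        using IHb[OF ne(1)] IHb[OF ne(2)] q1nn unfolding a1_def a0_def c1_def c0_def
        by (intro add_mono mult_left_mono) auto
      also have "\<dots> = exp K * (q1 * exp (l * a1) + (1 - q1) * exp (l * a0))"
      proof -
        have q0e: "q0 = 1 - q1" using q by simp
        show ?thesis unfolding q0e by (simp add: exp_add algebra_simps)
      qed
      also have "\<dots> \<le> exp K * exp (l * (q1 * a1 + (1 - q1) * a0) + l\<^sup>2 * (a1 - a0)\<^sup>2 / 8)"
        using two_point[of q1 l a1 a0] q q1nn by simp
      also have "\<dots> \<le> exp K * exp (l * measure_pmf.expectation p f + l\<^sup>2 * c\<^sup>2 / 8)"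
      proof -
        have "l\<^sup>2 * (a1 - a0)\<^sup>2 \<le> l\<^sup>2 * c\<^sup>2" using sq by (simp add: mult_left_mono)
        moreover have "1 - q1 = q0" using q by simp
        ultimately have "l * (q1 * a1 + (1 - q1) * a0) + l\<^sup>2 * (a1 - a0)\<^sup>2 / 8
           \<le> l * measure_pmf.expectation p f + l\<^sup>2 * c\<^sup>2 / 8" unfolding Ef by simp
        thus ?thesis by simp
      qed
      also have "\<dots> = exp (l * measure_pmf.expectation p f + l\<^sup>2 * c\<^sup>2 * real (Suc k) / 8)"
        unfolding K_def by (simp add: exp_add[symmetric] algebra_simps add_divide_distrib)
      finally show ?thesis .
    qed
  qed
qed

lemma chernoff:
  fixes p :: "'a pmf" and f :: "'a \<Rightarrow> real" and \<mu> V t :: real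
  assumes fin: "finite (set_pmf p)" and V: "V > 0"
    and mgf: "\<And>l. measure_pmf.expectation p (\<lambda>x. exp (l * f x)) \<le> exp (l * \<mu> + l\<^sup>2 * V)"
    and t: "t > 0"
  shows "measure_pmf.prob p {x. f x \<ge> \<mu> + t} \<le> exp (- (t\<^sup>2) / (4 * V))"
    and "measure_pmf.prob p {x. f x \<le> \<mu> - t} \<le> exp (- (t\<^sup>2) / (4 * V))"
proof -
  have PE: "measure_pmf.prob p A = measure_pmf.expectation p (indicator A)" for A
    by simp
  have gen: "measure_pmf.prob p A \<le> exp (- (t\<^sup>2) / (4 * V))"
    if l: "l\<^sup>2 = t\<^sup>2 / (4 * V\<^sup>2)"
      and pt: "\<And>x. x \<in> A \<Longrightarrow> l * (f x - \<mu>) \<ge> t * t / (2 * V)" for A l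
  proof -
    define s where "s = t * t / (2 * V)"
    have "measure_pmf.expectation p (indicator A) \<le> measure_pmf.expectation p (\<lambda>x. exp (l * f x) * exp (- (l * \<mu>) - s))"
    proof (rule E_mono[OF fin])
      fix x
      show "indicator A x \<le> exp (l * f x) * exp (- (l * \<mu>) - s)"
      proof (cases "x \<in> A")
        case True
        hence "0 \<le> l * f x - l * \<mu> - s" using pt[OF True] unfolding s_def by (simp add: algebra_simps)
        hence "1 \<le> exp (l * f x + (- (l * \<mu>) - s))" by simp
        thus ?thesis using True by (simp add: exp_add)
      qed simp
    qed
    also have "\<dots> = measure_pmf.expectation p (\<lambda>x. exp (l * f x)) * exp (- (l * \<mu>) - s)"
      by simp
    also have "\<dots> \<le> exp (l * \<mu> + l\<^sup>2 * V) * exp (- (l * \<mu>) - s)"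
      using mgf by (intro mult_right_mono) auto
    also have "\<dots> = exp (l\<^sup>2 * V - s)" by (simp add: exp_add[symmetric])
    also have "l\<^sup>2 * V - s = - (t\<^sup>2) / (4 * V)"
      unfolding l s_def using V by (simp add: field_simps power2_eq_square)
    finally show ?thesis unfolding PE .
  qed
  show "measure_pmf.prob p {x. f x \<ge> \<mu> + t} \<le> exp (- (t\<^sup>2) / (4 * V))"
  proof (rule gen[of "t / (2 * V)"])
    show "(t / (2 * V))\<^sup>2 = t\<^sup>2 / (4 * V\<^sup>2)" by (simp add: power_divide power_mult_distrib)
    fix x assume "x \<in> {x. f x \<ge> \<mu> + t}"
    hence "f x - \<mu> \<ge> t" by simp
    hence "t * t / (2 * V) \<le> t * (f x - \<mu>) / (2 * V)" using t V
      by (intro divide_right_mono mult_left_mono) auto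
    thus "t * t / (2 * V) \<le> t / (2 * V) * (f x - \<mu>)" by simp
  qed
  show "measure_pmf.prob p {x. f x \<le> \<mu> - t} \<le> exp (- (t\<^sup>2) / (4 * V))"
  proof (rule gen[of "- t / (2 * V)"])
    show "(- t / (2 * V))\<^sup>2 = t\<^sup>2 / (4 * V\<^sup>2)" by (simp add: power_divide power_mult_distrib)
    fix x assume "x \<in> {x. f x \<le> \<mu> - t}"
    hence "\<mu> - f x \<ge> t" by simp
    hence "t * t / (2 * V) \<le> t * (\<mu> - f x) / (2 * V)" using t V
      by (intro divide_right_mono mult_left_mono) auto
    moreover have "t * (\<mu> - f x) / (2 * V) = - t / (2 * V) * (f x - \<mu>)" using V by (simp add: field_simps)
    ultimately show "t * t / (2 * V) \<le> - t / (2 * V) * (f x - \<mu>)" by simp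
  qed
qed

theorem mainTheorem1:
  fixes n :: nat and p :: "bool list pmf" and f :: "bool list \<Rightarrow> real"
  assumes "set_pmf p \<subseteq> {xs. length xs = n}"
    and "neg_regression n p"
    and "lipschitz1 n f"
  defines "\<mu> \<equiv> measure_pmf.expectation p f"
  shows "(\<forall>t::real. t > 0 \<longrightarrow>
              measure_pmf.prob p {xs. f xs \<ge> \<mu> + t} \<le> exp (- (t\<^sup>2) / (2 * real n))
            \<and> measure_pmf.prob p {xs. f xs \<le> \<mu> - t} \<le> exp (- (t\<^sup>2) / (2 * real n)))
       \<and> (monotone_fun n f \<longrightarrow>
           (\<forall>t::real. t > 0 \<longrightarrow>
              measure_pmf.prob p {xs. f xs \<ge> \<mu> + t} \<le> exp (- 2 * t\<^sup>2 / real n)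
            \<and> measure_pmf.prob p {xs. f xs \<le> \<mu> - t} \<le> exp (- 2 * t\<^sup>2 / real n)))"
proof -
  have fin: "finite (set_pmf p)" using assms(1) finite_len finite_subset by blast
  have cardn: "card (nc n p) \<le> n" using card_mono[OF finite_lessThan nc_sub[of n p]] by simp
  have M: "measure_pmf.expectation p (\<lambda>x. exp (l * f x)) \<le> exp (l * \<mu> + l\<^sup>2 * (c\<^sup>2 * real n / 8))"
    if hc: "c = 2 \<or> (c = 1 \<and> monotone_fun n f)" for c l
  proof -
    have "measure_pmf.expectation p (\<lambda>x. exp (l * f x)) \<le> exp (l * \<mu> + l\<^sup>2 * c\<^sup>2 * real n / 8)"
      using mgf[OF assms(3) hc, of n l] assms(1,2) cardn unfolding \<mu>_def by blast
    thus ?thesis by (simp add: algebra_simps)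
  qed
  show ?thesis
  proof (cases "n = 0")
    case True
    thus ?thesis by simp
  next
    case False
    hence npos: "real n > 0" by simp
    have A: "measure_pmf.prob p {xs. f xs \<ge> \<mu> + t} \<le> exp (- (t\<^sup>2) / (4 * (c\<^sup>2 * real n / 8)))
        \<and> measure_pmf.prob p {xs. f xs \<le> \<mu> - t} \<le> exp (- (t\<^sup>2) / (4 * (c\<^sup>2 * real n / 8)))"
      if hc: "c = 2 \<or> (c = 1 \<and> monotone_fun n f)" and t: "t > 0" for c t
    proof -
      have V: "c\<^sup>2 * real n / 8 > 0" using hc npos by auto
      show ?thesis using chernoff[OF fin V M[OF hc] t] by blast
    qed
    have e2: "- (t\<^sup>2) / (4 * (2\<^sup>2 * real n / 8)) = - (t\<^sup>2) / (2 * real n)" for t :: real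
      using npos by (simp add: field_simps)
    have e1: "- (t\<^sup>2) / (4 * (1\<^sup>2 * real n / 8)) = - 2 * t\<^sup>2 / real n" for t :: real
      using npos by (simp add: field_simps)
    show ?thesis
    proof (intro conjI allI impI)
      fix t :: real assume t: "t > 0"
      show "measure_pmf.prob p {xs. f xs \<ge> \<mu> + t} \<le> exp (- (t\<^sup>2) / (2 * real n))"
        unfolding e2[of t, symmetric] using A[of 2 t] t by blast
      show "measure_pmf.prob p {xs. f xs \<le> \<mu> - t} \<le> exp (- (t\<^sup>2) / (2 * real n))"
        unfolding e2[of t, symmetric] using A[of 2 t] t by blast
    next
      fix t :: real assume m: "monotone_fun n f" and t: "t > 0"
      show "measure_pmf.prob p {xs. f xs \<ge> \<mu> + t} \<le> exp (- 2 * t\<^sup>2 / real n)"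
        unfolding e1[of t, symmetric] using A[of 1 t] m t by blast
      show "measure_pmf.prob p {xs. f xs \<le> \<mu> - t} \<le> exp (- 2 * t\<^sup>2 / real n)"
        unfolding e1[of t, symmetric] using A[of 1 t] m t by blast
    qed
  qed
qed

end
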